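(* Let $\mathcal{A}\subset\mathbb{Z}$ be a finite alphabet, let $G=(V,E)$ be a finite directed graph with edge labelling $\ell:E\to\mathcal{A}$, assume the matrix $M=\sum_{a\in\mathcal{A}}M_a$ is primitive, let $\beta>1$ be a Pisot number and let $\nu=(\phi^+)_*(\mu^+)$ as described in the context. Then the set $P=\{x\in\mathbb{R}\mid \nu(\{x\})>0\}$ of atoms of $\nu$ is a finite subset of $\mathbb{Q}(\beta)$.
   Context: For $a\in\mathcal{A}$, $M_a$ is the $V\times V$ matrix with $(M_a)_{ij}=1$ if $(i,j)\in E$ and $\ell((i,j))=a$, and $0$ otherwise. By Perron–Frobenius, $M$ has a dominant eigenvalue $\lambda>0$ with positive left eigenvector $\mathbf v_L$ and right eigenvector $\mathbf v_R$, normalised by $\mathbf v_L^{\mathsf T}\mathbf v_R=1$. $\mathcal{K}^+\subseteq\mathcal{A}^{\mathbb{N}}$ is the set of sequences $(\ell(e_k))_{k\ge1}$ for infinite paths $e_1e_2\ldots$ in $G$ (terminal vertex of $e_j$ equals initial vertex of $e_{j+1}$). $\mu^+$ is the Borel probability measure on $\mathcal{K}^+$ with $\mu^+([\varepsilon_1,\ldots,\varepsilon_k])=\lambda^{-k}\mathbf v_L^{\mathsf T}M_{\varepsilon_1}\cdots M_{\varepsilon_k}\mathbf v_R$ on cylinder sets $[\varepsilon_1,\ldots,\varepsilon_k]=\{x\in\mathcal{K}^+: x_1=\varepsilon_1,\ldots,x_k=\varepsilon_k\}$. A Pisot number is an algebraic integer $>1$ all of whose other Galois conjugates have modulus $<1$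 (integers $\ge2$ included). $\phi^+:\mathcal{K}^+\to\mathbb{R}$, $(x_k)\mapsto\sum_{k\ge1}x_k\beta^{-k}$, and $\nu(A)=\mu^+((\phi^+)^{-1}(A))$. *)

theory Defs
  imports "HOL-Probability.Probability" "HOL-Computational_Algebra.Polynomial_Factorial"
begin

text \<open>Square matrices over the vertex set {..<n}, represented as functions nat => nat => real.\<close>

definition mat_mult :: "nat \<Rightarrow> (nat \<Rightarrow> nat \<Rightarrow> real) \<Rightarrow> (nat \<Rightarrow> nat \<Rightarrow> real) \<Rightarrow> nat \<Rightarrow> nat \<Rightarrow> real" where
  "mat_mult n A B = (\<lambda>i j. \<Sum>l<n. A i l * B l j)"

definition mat_id :: "nat \<Rightarrow> nat \<Rightarrow> real" where
  "mat_id = (\<lambda>i j. if i = j then 1 else 0)"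

fun mat_pow :: "nat \<Rightarrow> (nat \<Rightarrow> nat \<Rightarrow> real) \<Rightarrow> nat \<Rightarrow> nat \<Rightarrow> nat \<Rightarrow> real" where
  "mat_pow n A 0 = mat_id"
| "mat_pow n A (Suc k) = mat_mult n A (mat_pow n A k)"

definition primitive_matrix :: "nat \<Rightarrow> (nat \<Rightarrow> nat \<Rightarrow> real) \<Rightarrow> bool" where
  "primitive_matrix n A \<longleftrightarrow> (\<forall>i<n. \<forall>j<n. A i j \<ge> 0) \<and>
     (\<exists>k>0. \<forall>i<n. \<forall>j<n. mat_pow n A k i j > 0)"

definition label_matrix :: "(nat \<times> nat) set \<Rightarrow> (nat \<times> nat \<Rightarrow> int) \<Rightarrow> int \<Rightarrow> nat \<Rightarrow> nat \<Rightarrow> real" where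
  "label_matrix E lbl a = (\<lambda>i j. if (i, j) \<in> E \<and> lbl (i, j) = a then 1 else 0)"

definition total_matrix :: "int set \<Rightarrow> (nat \<times> nat) set \<Rightarrow> (nat \<times> nat \<Rightarrow> int) \<Rightarrow> nat \<Rightarrow> nat \<Rightarrow> real" where
  "total_matrix Alph E lbl = (\<lambda>i j. \<Sum>a\<in>Alph. label_matrix E lbl a i j)"

definition word_matrix :: "nat \<Rightarrow> (nat \<times> nat) set \<Rightarrow> (nat \<times> nat \<Rightarrow> int) \<Rightarrow> int list \<Rightarrow> nat \<Rightarrow> nat \<Rightarrow> real" where
  "word_matrix n E lbl w = foldr (\<lambda>a B. mat_mult n (label_matrix E lbl a) B) w mat_id"

definition bilin :: "nat \<Rightarrow> (nat \<Rightarrow> real) \<Rightarrow> (nat \<Rightarrow> nat \<Rightarrow> real) \<Rightarrow> (nat \<Rightarrow> real) \<Rightarrow> real" where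
  "bilin n u A v = (\<Sum>i<n. \<Sum>j<n. u i * A i j * v j)"

text \<open>K^+: label sequences of infinite paths (sequences indexed from 0, i.e. x_{k+1} = x k).\<close>
definition K_plus :: "nat \<Rightarrow> (nat \<times> nat) set \<Rightarrow> (nat \<times> nat \<Rightarrow> int) \<Rightarrow> (nat \<Rightarrow> int) set" where
  "K_plus n E lbl = {x. \<exists>p::nat \<Rightarrow> nat. \<forall>k. p k < n \<and> (p k, p (Suc k)) \<in> E \<and> x k = lbl (p k, p (Suc k))}"

definition cylinder :: "(nat \<Rightarrow> int) set \<Rightarrow> int list \<Rightarrow> (nat \<Rightarrow> int) set" where
  "cylinder K w = {x \<in> K. \<forall>k<length w. x k = w ! k}"

definition phi_plus :: "real \<Rightarrow> (nat \<Rightarrow> int) \<Rightarrow> real" where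
  "phi_plus \<beta> x = (\<Sum>k. real_of_int (x k) / \<beta> ^ Suc k)"

definition pisot :: "real \<Rightarrow> bool" where
  "pisot \<beta> \<longleftrightarrow> \<beta> > 1 \<and> (\<exists>p :: int poly. lead_coeff p = 1 \<and> irreducible p \<and>
      poly (map_poly of_int p) \<beta> = 0 \<and>
      (\<forall>z::complex. poly (map_poly of_int p) z = 0 \<and> z \<noteq> complex_of_real \<beta> \<longrightarrow> cmod z < 1))"

definition rat_adjoin :: "real \<Rightarrow> real set" where
  "rat_adjoin \<beta> = {x. \<exists>p q :: rat poly. poly (map_poly of_rat q) \<beta> \<noteq> 0 \<and>
       x = poly (map_poly of_rat p) \<beta> / poly (map_poly of_rat q) \<beta>}"

end

theory Submission
  imports Defs
begin

lemma map_poly_of_rat_add: "map_poly (of_rat :: rat \<Rightarrow> real) (p + q) = map_poly of_rat p + map_poly of_rat q"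
  by (rule poly_eqI) (simp add: coeff_map_poly of_rat_add)

locale setting =
  fixes Alph :: "int set" and n :: nat and E :: "(nat \<times> nat) set" and lbl :: "nat \<times> nat \<Rightarrow> int"
    and \<beta> lam :: real and vL vR :: "nat \<Rightarrow> real" and \<mu> :: "(nat \<Rightarrow> int) measure"
  assumes alph: "finite Alph"
    and graph: "E \<subseteq> {..<n} \<times> {..<n}"
    and lab_in: "\<forall>e\<in>E. lbl e \<in> Alph"
    and prim: "primitive_matrix n (total_matrix Alph E lbl)"
    and beta_gt: "\<beta> > 1"
    and lam_pos: "lam > 0"
    and vL_pos: "\<forall>i<n. vL i > 0" and vR_pos: "\<forall>i<n. vR i > 0"
    and vR_eig: "\<forall>i<n. (\<Sum>j<n. total_matrix Alph E lbl i j * vR j) = lam * vR i"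
    and mu_prob: "prob_space \<mu>"
    and mu_sets: "sets \<mu> = sets (PiM UNIV (\<lambda>_::nat. count_space (UNIV :: int set)))"
    and mu_supp: "emeasure \<mu> (K_plus n E lbl) = 1"
    and mu_cyl: "\<forall>w::int list. measure \<mu> (cylinder (K_plus n E lbl) w) =
        bilin n vL (word_matrix n E lbl w) vR / lam ^ length w"
begin

abbreviation "K \<equiv> K_plus n E lbl"
abbreviation "phi \<equiv> phi_plus \<beta>"
definition "Amax = (\<Sum>a\<in>Alph. \<bar>a\<bar>)"
definition "B = real_of_int Amax / (\<beta> - 1)"

lemma Alph_bound: "a \<in> Alph \<Longrightarrow> \<bar>a\<bar> \<le> Amax"
  unfolding Amax_def by (rule member_le_sum) (use alph in auto)

lemma total_matrix_eq: "total_matrix Alph E lbl i j = (if (i, j) \<in> E then 1 else 0)"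
proof (cases "(i,j) \<in> E")
  case True
  then have l: "lbl (i,j) \<in> Alph" using lab_in by auto
  have "total_matrix Alph E lbl i j = (\<Sum>a\<in>Alph. if a = lbl (i,j) then 1 else 0)"
    unfolding total_matrix_def label_matrix_def using True by (intro sum.cong) auto
  also have "\<dots> = 1" using alph l by (simp add: sum.delta')
  finally show ?thesis using True by simp
next
  case False
  then show ?thesis unfolding total_matrix_def label_matrix_def by simp
qed

lemma K_alph: "s \<in> K \<Longrightarrow> s t \<in> Alph"
  unfolding K_plus_def using lab_in by auto

lemma K_shift: "s \<in> K \<Longrightarrow> (\<lambda>t. s (Suc t)) \<in> K"
proof -
  assume "s \<in> K"
  then obtain p where p: "\<forall>k. p k < n \<and> (p k, p (Suc k)) \<in> E \<and> s k = lbl (p k, p (Suc k))"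
    unfolding K_plus_def by auto
  show ?thesis unfolding K_plus_def
    by (rule CollectI, rule exI[of _ "\<lambda>k. p (Suc k)"]) (use p in auto)
qed

lemma beta_pos: "\<beta> > 0" using beta_gt by simp

lemma phi_summable:
  assumes "\<forall>t. \<bar>s t\<bar> \<le> Amax"
  shows "summable (\<lambda>k. real_of_int (s k) / \<beta> ^ Suc k)"
proof (rule summable_comparison_test)
  have a: "\<bar>real_of_int (s k)\<bar> \<le> real_of_int Amax" for k
    using assms by (metis of_int_abs of_int_le_iff)
  show "\<exists>N. \<forall>k\<ge>N. norm (real_of_int (s k) / \<beta> ^ Suc k) \<le> real_of_int Amax / \<beta> * (1/\<beta>) ^ k"
    using a beta_pos by (auto simp: abs_divide power_divide divide_right_mono)
  show "summable (\<lambda>k. real_of_int Amax / \<beta> * (1/\<beta>) ^ k)"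
    using beta_gt by (intro summable_mult summable_geometric) auto
qed

lemma phi_bound:
  assumes "\<forall>t. \<bar>s t\<bar> \<le> Amax"
  shows "\<bar>phi s\<bar> \<le> B"
proof -
  have a: "\<bar>real_of_int (s k)\<bar> \<le> real_of_int Amax" for k
    using assms by (metis of_int_abs of_int_le_iff)
  let ?g = "\<lambda>k. real_of_int Amax / \<beta> * (1/\<beta>) ^ k"
  let ?f = "\<lambda>k. real_of_int (s k) / \<beta> ^ Suc k"
  have sg: "summable ?g"
    using beta_gt by (intro summable_mult summable_geometric) auto
  have sf: "summable ?f" by (rule phi_summable[OF assms])
  have b: "\<bar>?f k\<bar> \<le> ?g k" for k
    using a[of k] beta_pos by (auto simp: abs_divide power_divide divide_right_mono)
  have "suminf ?f \<le> suminf ?g"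
    by (rule suminf_le[OF _ sf sg]) (rule abs_le_D1[OF b])
  moreover have "- suminf ?g \<le> suminf ?f"
  proof -
    have "suminf (\<lambda>k. - ?g k) \<le> suminf ?f"
      by (rule suminf_le[OF _ summable_minus[OF sg] sf]) (use abs_le_D2[OF b] in \<open>simp only: neg_le_iff_le minus_le_iff\<close>)
    then show ?thesis using suminf_minus[OF sg] by simp
  qed
  ultimately have "\<bar>phi s\<bar> \<le> suminf ?g" unfolding phi_plus_def by linarith
  also have "suminf ?g = real_of_int Amax / \<beta> * (1 / (1 - 1/\<beta>))"
    using beta_gt by (subst suminf_mult) (auto simp: suminf_geometric)
  also have "\<dots> = B" unfolding B_def using beta_gt by (simp add: field_simps)
  finally show ?thesis .
qed

lemma K_bound: "s \<in> K \<Longrightarrow> \<forall>t. \<bar>s t\<bar> \<le> Amax"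
  using K_alph Alph_bound by auto

lemma phi_step:
  assumes "\<forall>t. \<bar>s t\<bar> \<le> Amax"
  shows "phi s = (real_of_int (s 0) + phi (\<lambda>t. s (Suc t))) / \<beta>"
proof -
  let ?f = "\<lambda>k. real_of_int (s k) / \<beta> ^ Suc k"
  have sf: "summable ?f" by (rule phi_summable[OF assms])
  have "(\<Sum>k. ?f (Suc k)) = (\<Sum>k. (real_of_int (s (Suc k)) / \<beta> ^ Suc k) / \<beta>)"
    by (simp add: field_simps)
  also have "\<dots> = phi (\<lambda>t. s (Suc t)) / \<beta>"
    unfolding phi_plus_def
    by (rule suminf_divide[OF phi_summable]) (use assms in auto)
  finally have "phi (\<lambda>t. s (Suc t)) / \<beta> = phi s - ?f 0"
    using suminf_split_head[OF sf] unfolding phi_plus_def by simp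
  then show ?thesis using beta_pos by (simp add: field_simps)
qed

lemma phi_shiftk:
  assumes "\<forall>t. \<bar>s t\<bar> \<le> Amax"
  shows "phi s = (\<Sum>t<k. real_of_int (s t) / \<beta> ^ Suc t) + phi (\<lambda>t. s (t + k)) / \<beta> ^ k"
proof (induction k)
  case 0 then show ?case by simp
next
  case (Suc k)
  have "phi (\<lambda>t. s (t + k)) = (real_of_int (s k) + phi (\<lambda>t. s (t + Suc k))) / \<beta>"
    using phi_step[of "\<lambda>t. s (t + k)"] assms by simp
  then show ?case using Suc beta_pos by (simp add: field_simps)
qed

definition Vv :: "int list \<Rightarrow> nat \<Rightarrow> real" where
  "Vv w i = (\<Sum>j<n. word_matrix n E lbl w i j * vR j)"

definition words :: "nat \<Rightarrow> int list set" where
  "words k = {w. set w \<subseteq> Alph \<and> length w = k}"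

lemma finite_words: "finite (words k)"
  unfolding words_def by (rule finite_lists_length_eq[OF alph])

lemma Vv_Cons: "Vv (a # w) i = (\<Sum>j<n. label_matrix E lbl a i j * Vv w j)"
proof -
  have "Vv (a # w) i = (\<Sum>j<n. (\<Sum>l<n. label_matrix E lbl a i l * word_matrix n E lbl w l j) * vR j)"
    unfolding Vv_def word_matrix_def by (simp add: mat_mult_def)
  also have "\<dots> = (\<Sum>l<n. label_matrix E lbl a i l * (\<Sum>j<n. word_matrix n E lbl w l j * vR j))"
    apply (simp add: sum_distrib_left sum_distrib_right mult.assoc)
    by (rule sum.swap)
  finally show ?thesis unfolding Vv_def .
qed

lemma Vv_Nil: "Vv [] i = (if i < n then vR i else 0)"
proof -
  have "Vv [] i = (\<Sum>j<n. if i = j then vR j else 0)"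
    unfolding Vv_def word_matrix_def mat_id_def by (intro sum.cong) auto
  then show ?thesis by (simp add: sum.delta)
qed

lemma wm_nonneg: "word_matrix n E lbl w i j \<ge> 0"
proof (induction w arbitrary: i j)
  case Nil then show ?case by (simp add: word_matrix_def mat_id_def)
next
  case (Cons a w)
  have "word_matrix n E lbl (a # w) i j = (\<Sum>l<n. label_matrix E lbl a i l * word_matrix n E lbl w l j)"
    unfolding word_matrix_def by (simp add: mat_mult_def)
  also have "\<dots> \<ge> 0" using Cons by (intro sum_nonneg mult_nonneg_nonneg) (auto simp: label_matrix_def)
  finally show ?case .
qed

lemma Vv_nonneg: "Vv w i \<ge> 0"
  unfolding Vv_def using wm_nonneg vR_pos by (intro sum_nonneg mult_nonneg_nonneg) (auto intro: less_imp_le)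

lemma label_sum: "(\<Sum>a\<in>Alph. label_matrix E lbl a i j * f a) = (if (i,j) \<in> E then f (lbl (i,j)) else 0)"
proof (cases "(i,j) \<in> E")
  case True
  then have l: "lbl (i,j) \<in> Alph" using lab_in by auto
  have "(\<Sum>a\<in>Alph. label_matrix E lbl a i j * f a) = (\<Sum>a\<in>Alph. if a = lbl (i,j) then f a else 0)"
    unfolding label_matrix_def using True by (intro sum.cong) auto
  also have "\<dots> = f (lbl (i,j))" using alph l by (simp add: sum.delta')
  finally show ?thesis using True by simp
qed (simp add: label_matrix_def)

lemma eig_Nil: "(\<Sum>j<n. (if (i,j) \<in> E then 1 else 0) * Vv [] j) = lam * Vv [] i"
proof (cases "i < n")
  case True
  have "(\<Sum>j<n. (if (i,j) \<in> E then 1 else 0) * Vv [] j) = (\<Sum>j<n. total_matrix Alph E lbl i j * vR j)"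
    by (intro sum.cong) (auto simp: Vv_Nil total_matrix_eq)
  then show ?thesis using vR_eig True by (simp add: Vv_Nil)
next
  case False
  then have "\<forall>j. (i,j) \<notin> E" using graph by auto
  then show ?thesis using False by (simp add: Vv_Nil)
qed

lemma Vv_snoc_sum: "(\<Sum>a\<in>Alph. Vv (u @ [a]) i) = lam * Vv u i"
proof (induction u arbitrary: i)
  case Nil
  have "(\<Sum>a\<in>Alph. Vv [a] i) = (\<Sum>a\<in>Alph. \<Sum>j<n. label_matrix E lbl a i j * Vv [] j)"
    by (simp add: Vv_Cons)
  also have "\<dots> = (\<Sum>j<n. \<Sum>a\<in>Alph. label_matrix E lbl a i j * Vv [] j)" by (rule sum.swap)
  also have "\<dots> = (\<Sum>j<n. (if (i,j) \<in> E then 1 else 0) * Vv [] j)"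
    by (intro sum.cong refl) (simp add: label_sum[where f = "\<lambda>_. Vv [] _"])
  also have "\<dots> = lam * Vv [] i" by (rule eig_Nil)
  finally show ?case by simp
next
  case (Cons b u)
  have "(\<Sum>a\<in>Alph. Vv ((b # u) @ [a]) i) = (\<Sum>a\<in>Alph. \<Sum>j<n. label_matrix E lbl b i j * Vv (u @ [a]) j)"
    by (simp add: Vv_Cons)
  also have "\<dots> = (\<Sum>j<n. label_matrix E lbl b i j * (\<Sum>a\<in>Alph. Vv (u @ [a]) j))"
    by (subst sum.swap) (simp add: sum_distrib_left)
  also have "\<dots> = (\<Sum>j<n. label_matrix E lbl b i j * (lam * Vv u j))" by (simp add: Cons)
  also have "\<dots> = lam * Vv (b # u) i" by (simp add: Vv_Cons sum_distrib_left mult.left_commute)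
  finally show ?case .
qed

lemma words_Suc: "words (Suc k) = (\<lambda>(u,a). u @ [a]) ` (words k \<times> Alph)"
proof
  show "words (Suc k) \<subseteq> (\<lambda>(u,a). u @ [a]) ` (words k \<times> Alph)"
  proof
    fix w assume w: "w \<in> words (Suc k)"
    then have len: "length w = Suc k" and sw: "set w \<subseteq> Alph" unfolding words_def by auto
    have "take (Suc k) w = take k w @ [w ! k]" by (rule take_Suc_conv_app_nth) (use len in simp)
    moreover have "take (Suc k) w = w" using len by simp
    ultimately have "w = take k w @ [w ! k]" by simp
    moreover have "take k w \<in> words k" using len sw set_take_subset[of k w] unfolding words_def by auto
    moreover have "w ! k \<in> Alph" using len sw nth_mem[of k w] by auto
    ultimately show "w \<in> (\<lambda>(u,a). u @ [a]) ` (words k \<times> Alph)"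
      by (intro image_eqI[where x = "(take k w, w ! k)"]) auto
  qed
qed (auto simp: words_def)

lemma Vv_words: "(\<Sum>w\<in>words k. Vv w i) = lam ^ k * Vv [] i"
proof (induction k arbitrary: i)
  case 0
  have "words 0 = {[]}" by (auto simp: words_def)
  then show ?case by simp
next
  case (Suc k)
  have inj: "inj_on (\<lambda>(u,a). u @ [a]) (words k \<times> Alph)" by (auto simp: inj_on_def)
  have "(\<Sum>w\<in>words (Suc k). Vv w i) = (\<Sum>(u,a)\<in>words k \<times> Alph. Vv (u @ [a]) i)"
    unfolding words_Suc by (subst sum.reindex[OF inj]) (simp add: case_prod_beta')
  also have "\<dots> = (\<Sum>u\<in>words k. \<Sum>a\<in>Alph. Vv (u @ [a]) i)" by (rule sum.cartesian_product[symmetric])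
  also have "\<dots> = (\<Sum>u\<in>words k. lam * Vv u i)" by (simp add: Vv_snoc_sum)
  also have "\<dots> = lam ^ Suc k * Vv [] i" by (simp add: sum_distrib_left[symmetric] Suc)
  finally show ?case .
qed

definition W :: "nat \<Rightarrow> real \<Rightarrow> int list set" where
  "W k y = {w. length w = k \<and> (\<exists>s\<in>K. phi s = y \<and> (\<forall>t<k. s t = w ! t))}"

lemma W_words: "W k y \<subseteq> words k"
proof
  fix w assume "w \<in> W k y"
  then obtain s where w: "length w = k" "s \<in> K" "\<forall>t<k. s t = w ! t" unfolding W_def by auto
  have "set w \<subseteq> Alph"
  proof
    fix x assume "x \<in> set w"
    then obtain t where "t < k" "x = w ! t" using w(1) by (auto simp: in_set_conv_nth)
    then show "x \<in> Alph" using w K_alph by metis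
  qed
  then show "w \<in> words k" using w unfolding words_def by auto
qed

lemma finite_W: "finite (W k y)"
  using finite_subset[OF W_words finite_words] .

lemma W_Suc_snoc: "W (Suc k) y \<subseteq> (\<lambda>(u,a). u @ [a]) ` (W k y \<times> Alph)"
proof
  fix w assume w: "w \<in> W (Suc k) y"
  then obtain s where s: "length w = Suc k" "s \<in> K" "phi s = y" "\<forall>t<Suc k. s t = w ! t" unfolding W_def by auto
  have e: "w = take k w @ [w ! k]" using s(1)
    by (metis lessI take_Suc_conv_app_nth take_all order_refl)
  have "take k w \<in> W k y" unfolding W_def using s by auto
  moreover have "w ! k \<in> Alph" using s K_alph by (metis lessI)
  ultimately show "w \<in> (\<lambda>(u,a). u @ [a]) ` (W k y \<times> Alph)" using e by force
qed

lemma W_Suc_cons: "W (Suc k) y \<subseteq> (\<lambda>(a,u). a # u) ` (SIGMA a:Alph. W k (\<beta> * y - of_int a))"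
proof
  fix w assume w: "w \<in> W (Suc k) y"
  then obtain s where s: "length w = Suc k" "s \<in> K" "phi s = y" "\<forall>t<Suc k. s t = w ! t" unfolding W_def by auto
  obtain a u where au: "w = a # u" using s(1) by (cases w) auto
  have a: "a = s 0" using s(4) au by auto
  have "phi (\<lambda>t. s (Suc t)) = \<beta> * y - of_int a"
    using phi_step[OF K_bound[OF s(2)]] s(3) a beta_pos by (simp add: field_simps)
  then have "u \<in> W k (\<beta> * y - of_int a)" unfolding W_def
    using s au K_shift[OF s(2)] by (auto intro!: bexI[of _ "\<lambda>t. s (Suc t)"])
  moreover have "a \<in> Alph" using a K_alph s(2) by auto
  ultimately show "w \<in> (\<lambda>(a,u). a # u) ` (SIGMA a:Alph. W k (\<beta> * y - of_int a))" using au by force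
qed

lemma W_nonempty: "w \<in> W k y \<Longrightarrow> \<bar>y\<bar> \<le> B"
  unfolding W_def using phi_bound K_bound by auto

lemma W_close:
  assumes "w \<in> W k y" "w \<in> W k y'"
  shows "\<bar>y - y'\<bar> \<le> 2 * B / \<beta> ^ k"
proof -
  obtain s where s: "s \<in> K" "phi s = y" "\<forall>t<k. s t = w ! t" using assms(1) unfolding W_def by auto
  obtain s' where s': "s' \<in> K" "phi s' = y'" "\<forall>t<k. s' t = w ! t" using assms(2) unfolding W_def by auto
  have e: "(\<Sum>t<k. real_of_int (s t) / \<beta> ^ Suc t) = (\<Sum>t<k. real_of_int (s' t) / \<beta> ^ Suc t)"
    using s(3) s'(3) by (intro sum.cong) auto
  have b1: "\<bar>phi (\<lambda>t. s (t + k))\<bar> \<le> B" using K_bound[OF s(1)] by (intro phi_bound) auto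
  have b2: "\<bar>phi (\<lambda>t. s' (t + k))\<bar> \<le> B" using K_bound[OF s'(1)] by (intro phi_bound) auto
  have "y - y' = (phi (\<lambda>t. s (t + k)) - phi (\<lambda>t. s' (t + k))) / \<beta> ^ k"
    using phi_shiftk[OF K_bound[OF s(1)], of k] phi_shiftk[OF K_bound[OF s'(1)], of k] s(2) s'(2) e
    by (simp add: diff_divide_distrib)
  then have "\<bar>y - y'\<bar> = \<bar>phi (\<lambda>t. s (t + k)) - phi (\<lambda>t. s' (t + k))\<bar> / \<beta> ^ k"
    using beta_pos by (simp add: abs_divide)
  also have "\<dots> \<le> 2 * B / \<beta> ^ k"
    using b1 b2 beta_pos by (intro divide_right_mono) auto
  finally show ?thesis .
qed

definition N :: "nat \<Rightarrow> nat \<Rightarrow> real \<Rightarrow> real" where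
  "N k j y = (\<Sum>w\<in>W k y. Vv w j) / (lam ^ k * vR j)"

lemma N_nonneg: "j < n \<Longrightarrow> N k j y \<ge> 0"
  unfolding N_def using Vv_nonneg vR_pos lam_pos
  by (intro divide_nonneg_pos sum_nonneg) auto

lemma N_mono: assumes "j < n" shows "N (Suc k) j y \<le> N k j y"
proof -
  have "(\<Sum>w\<in>W (Suc k) y. Vv w j) \<le> (\<Sum>w\<in>(\<lambda>(u,a). u @ [a]) ` (W k y \<times> Alph). Vv w j)"
    by (rule sum_mono2[OF _ W_Suc_snoc]) (auto intro: Vv_nonneg finite_W alph)
  also have "\<dots> \<le> (\<Sum>(u,a)\<in>W k y \<times> Alph. Vv (u @ [a]) j)"
    by (rule order_trans[OF sum_image_le]) (auto intro: Vv_nonneg finite_W alph simp: case_prod_beta' comp_def)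
  also have "\<dots> = (\<Sum>u\<in>W k y. \<Sum>a\<in>Alph. Vv (u @ [a]) j)" by (rule sum.cartesian_product[symmetric])
  also have "\<dots> = lam * (\<Sum>u\<in>W k y. Vv u j)" by (simp add: Vv_snoc_sum sum_distrib_left)
  finally have *: "(\<Sum>w\<in>W (Suc k) y. Vv w j) \<le> lam * (\<Sum>u\<in>W k y. Vv u j)" .
  have p: "lam ^ Suc k * vR j > 0" using lam_pos vR_pos assms by auto
  have "N (Suc k) j y \<le> lam * (\<Sum>u\<in>W k y. Vv u j) / (lam ^ Suc k * vR j)"
    unfolding N_def using p * by (intro divide_right_mono) auto
  also have "\<dots> = N k j y" unfolding N_def using lam_pos by simp
  finally show ?thesis .
qed

definition P :: "nat \<Rightarrow> nat \<Rightarrow> real" where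
  "P j j' = (if (j, j') \<in> E then vR j' / (lam * vR j) else 0)"

lemma P_nonneg: "j < n \<Longrightarrow> P j j' \<ge> 0"
  unfolding P_def using graph vR_pos lam_pos by (auto intro!: divide_nonneg_pos less_imp_le)

lemma P_pos: "(j, j') \<in> E \<Longrightarrow> P j j' > 0"
  unfolding P_def using graph vR_pos lam_pos by (auto intro!: divide_pos_pos)

lemma P_sum: assumes "j < n" shows "(\<Sum>j'<n. P j j') = 1"
proof -
  have "(\<Sum>j'<n. P j j') = (\<Sum>j'<n. total_matrix Alph E lbl j j' * vR j') / (lam * vR j)"
    unfolding P_def sum_divide_distrib by (intro sum.cong) (auto simp: total_matrix_eq)
  also have "\<dots> = 1" using vR_eig assms vR_pos[rule_format, OF assms] lam_pos by simp
  finally show ?thesis .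
qed

lemma N_harm: assumes "j < n"
  shows "N (Suc k) j y \<le> (\<Sum>j'<n. P j j' * N k j' (\<beta> * y - of_int (lbl (j, j'))))"
proof -
  let ?S = "\<lambda>j' z. (\<Sum>u\<in>W k z. Vv u j')"
  have inj: "inj_on (\<lambda>(a,u). a # u) (SIGMA a:Alph. W k (\<beta> * y - of_int a))" by (auto simp: inj_on_def)
  have fin: "finite (SIGMA a:Alph. W k (\<beta> * y - of_int a))" using alph finite_W by auto
  have "(\<Sum>w\<in>W (Suc k) y. Vv w j) \<le> (\<Sum>w\<in>(\<lambda>(a,u). a # u) ` (SIGMA a:Alph. W k (\<beta> * y - of_int a)). Vv w j)"
    by (rule sum_mono2[OF _ W_Suc_cons]) (use fin Vv_nonneg in auto)
  also have "\<dots> = (\<Sum>(a,u)\<in>(SIGMA a:Alph. W k (\<beta> * y - of_int a)). Vv (a # u) j)"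
    by (subst sum.reindex[OF inj]) (simp add: case_prod_beta')
  also have "\<dots> = (\<Sum>a\<in>Alph. \<Sum>u\<in>W k (\<beta> * y - of_int a). Vv (a # u) j)"
    by (rule sum.Sigma[symmetric]) (use alph finite_W in auto)
  also have "\<dots> = (\<Sum>a\<in>Alph. \<Sum>u\<in>W k (\<beta> * y - of_int a). \<Sum>j'<n. label_matrix E lbl a j j' * Vv u j')"
    by (simp add: Vv_Cons)
  also have "\<dots> = (\<Sum>a\<in>Alph. \<Sum>j'<n. label_matrix E lbl a j j' * ?S j' (\<beta> * y - of_int a))"
    apply (intro sum.cong refl)
    apply (subst sum.swap)
    by (simp add: sum_distrib_left)
  also have "\<dots> = (\<Sum>j'<n. \<Sum>a\<in>Alph. label_matrix E lbl a j j' * ?S j' (\<beta> * y - of_int a))"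
    by (rule sum.swap)
  also have "\<dots> = (\<Sum>j'<n. if (j,j') \<in> E then ?S j' (\<beta> * y - of_int (lbl (j,j'))) else 0)"
    by (intro sum.cong refl) (rule label_sum)
  finally have *: "(\<Sum>w\<in>W (Suc k) y. Vv w j) \<le> (\<Sum>j'<n. if (j,j') \<in> E then ?S j' (\<beta> * y - of_int (lbl (j,j'))) else 0)" .
  have p: "lam ^ Suc k * vR j > 0" using lam_pos vR_pos assms by auto
  have "N (Suc k) j y \<le> (\<Sum>j'<n. if (j,j') \<in> E then ?S j' (\<beta> * y - of_int (lbl (j,j'))) else 0) / (lam ^ Suc k * vR j)"
    unfolding N_def using p * by (intro divide_right_mono) auto
  also have "\<dots> = (\<Sum>j'<n. P j j' * N k j' (\<beta> * y - of_int (lbl (j, j'))))"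
    unfolding sum_divide_distrib
  proof (intro sum.cong refl)
    fix j' assume "j' \<in> {..<n}"
    then have "vR j' > 0" using vR_pos by auto
    then show "(if (j,j') \<in> E then ?S j' (\<beta> * y - of_int (lbl (j,j'))) else 0) / (lam ^ Suc k * vR j) =
          P j j' * N k j' (\<beta> * y - of_int (lbl (j, j')))"
      unfolding P_def N_def using lam_pos vR_pos assms by (auto simp: field_simps)
  qed
  finally show ?thesis .
qed

lemma N_total:
  assumes "j < n" "finite Y" "\<And>y y'. y \<in> Y \<Longrightarrow> y' \<in> Y \<Longrightarrow> y \<noteq> y' \<Longrightarrow> W k y \<inter> W k y' = {}"
  shows "(\<Sum>y\<in>Y. N k j y) \<le> 1"
proof -
  have "(\<Sum>y\<in>Y. \<Sum>w\<in>W k y. Vv w j) = (\<Sum>w\<in>(\<Union>y\<in>Y. W k y). Vv w j)"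
    by (rule sum.UNION_disjoint[symmetric]) (use assms finite_W in auto)
  also have "\<dots> \<le> (\<Sum>w\<in>words k. Vv w j)"
    by (rule sum_mono2) (use finite_words W_words Vv_nonneg in auto)
  also have "\<dots> = lam ^ k * vR j" using Vv_words assms by (simp add: Vv_Nil)
  finally have *: "(\<Sum>y\<in>Y. \<Sum>w\<in>W k y. Vv w j) \<le> lam ^ k * vR j" .
  have p: "lam ^ k * vR j > 0" using lam_pos vR_pos assms by auto
  have "(\<Sum>y\<in>Y. N k j y) = (\<Sum>y\<in>Y. \<Sum>w\<in>W k y. Vv w j) / (lam ^ k * vR j)"
    unfolding N_def sum_divide_distrib ..
  also have "\<dots> \<le> 1" using * p by simp
  finally show ?thesis .
qed

lemma K_sets: "K \<in> sets \<mu>"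
  using mu_supp emeasure_notin_sets by fastforce

lemma pre_sets: "{x::nat \<Rightarrow> int. \<forall>t<length w. x t = w ! t} \<in> sets \<mu>"
proof -
  have "{x::nat \<Rightarrow> int. \<forall>t<length w. x t = w ! t} \<in> sets (PiM UNIV (\<lambda>_::nat. count_space (UNIV :: int set)))"
  proof -
    let ?M = "PiM UNIV (\<lambda>_::nat. count_space (UNIV :: int set))"
    have sp: "space ?M = UNIV" by (simp add: space_PiM)
    have m: "{x::nat \<Rightarrow> int. x t = c} \<in> sets ?M" for t c
    proof -
      have "(\<lambda>x::nat \<Rightarrow> int. x t) -` {c} \<inter> space ?M \<in> sets ?M"
        by (rule measurable_sets[OF measurable_component_singleton]) auto
      moreover have "(\<lambda>x::nat \<Rightarrow> int. x t) -` {c} \<inter> space ?M = {x. x t = c}" using sp by auto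
      ultimately show ?thesis by simp
    qed
    have "{x::nat \<Rightarrow> int. \<forall>t<length w. x t = w ! t} = (\<Inter>t\<in>{..<length w}. {x. x t = w ! t})"
      by auto
    also have "\<dots> \<in> sets ?M"
      by (rule sets.countable_INT'') (use m sets.top[of ?M] sp in auto)
    finally show ?thesis .
  qed
  then show ?thesis using mu_sets by simp
qed

lemma cyl_sets: "cylinder K w \<in> sets \<mu>"
proof -
  have "cylinder K w = K \<inter> {x. \<forall>t<length w. x t = w ! t}" unfolding cylinder_def by auto
  then show ?thesis using K_sets pre_sets by auto
qed

lemma bilin_Vv: "bilin n vL (word_matrix n E lbl w) vR = (\<Sum>i<n. vL i * Vv w i)"
  unfolding bilin_def Vv_def by (simp add: sum_distrib_left mult.assoc)

lemma N_mu: "measure \<mu> {s \<in> K. phi s = y} \<le> (\<Sum>i<n. vL i * vR i * N k i y)"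
proof -
  interpret prob_space \<mu> by (rule mu_prob)
  have sub: "{s \<in> K. phi s = y} \<subseteq> (\<Union>w\<in>W k y. cylinder K w)"
  proof
    fix s assume s: "s \<in> {s \<in> K. phi s = y}"
    let ?w = "map s [0..<k]"
    have "?w \<in> W k y" unfolding W_def using s by auto
    moreover have "s \<in> cylinder K ?w" unfolding cylinder_def using s by auto
    ultimately show "s \<in> (\<Union>w\<in>W k y. cylinder K w)" by blast
  qed
  have "measure \<mu> {s \<in> K. phi s = y} \<le> measure \<mu> (\<Union>w\<in>W k y. cylinder K w)"
    by (rule finite_measure_mono[OF sub]) (use cyl_sets finite_W in auto)
  also have "\<dots> \<le> (\<Sum>w\<in>W k y. measure \<mu> (cylinder K w))"
    by (rule finite_measure_subadditive_finite) (use cyl_sets finite_W in auto)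
  also have "\<dots> = (\<Sum>w\<in>W k y. (\<Sum>i<n. vL i * Vv w i) / lam ^ k)"
    using mu_cyl by (intro sum.cong refl) (auto simp: bilin_Vv W_def)
  also have "\<dots> = (\<Sum>i<n. vL i * vR i * N k i y)"
  proof -
    have "(\<Sum>w\<in>W k y. (\<Sum>i<n. vL i * Vv w i) / lam ^ k) = (\<Sum>i<n. \<Sum>w\<in>W k y. vL i * Vv w i / lam ^ k)"
      by (subst sum.swap) (simp add: sum_divide_distrib)
    also have "\<dots> = (\<Sum>i<n. vL i * vR i * N k i y)"
    proof (intro sum.cong refl)
      fix i assume "i \<in> {..<n}"
      then have "vR i > 0" using vR_pos by auto
      then show "(\<Sum>w\<in>W k y. vL i * Vv w i / lam ^ k) = vL i * vR i * N k i y"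
        unfolding N_def using lam_pos by (simp add: sum_distrib_left sum_divide_distrib field_simps)
    qed
    finally show ?thesis .
  qed
  finally show ?thesis .
qed

definition g :: "nat \<Rightarrow> real \<Rightarrow> real" where
  "g j y = Inf (range (\<lambda>k. N k j y))"

lemma N_bdd: "j < n \<Longrightarrow> bdd_below (range (\<lambda>k. N k j y))"
  using N_nonneg by (intro bdd_belowI[of _ 0]) auto

lemma N_lim: "j < n \<Longrightarrow> (\<lambda>k. N k j y) \<longlonglongrightarrow> g j y"
  unfolding g_def by (rule LIMSEQ_decseq_INF[OF N_bdd]) (auto intro!: decseq_SucI N_mono)

lemma g_le: "j < n \<Longrightarrow> g j y \<le> N k j y"
  unfolding g_def by (rule cInf_lower[OF rangeI N_bdd])

lemma g_nonneg: "j < n \<Longrightarrow> 0 \<le> g j y"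
  unfolding g_def by (rule cInf_greatest) (auto intro: N_nonneg)

lemma g_harm: assumes "j < n"
  shows "g j y \<le> (\<Sum>j'<n. P j j' * g j' (\<beta> * y - of_int (lbl (j, j'))))"
proof (rule tendsto_le[OF trivial_limit_sequentially])
  show "(\<lambda>k. N (Suc k) j y) \<longlonglongrightarrow> g j y" by (rule LIMSEQ_Suc[OF N_lim[OF assms]])
  show "(\<lambda>k. \<Sum>j'<n. P j j' * N k j' (\<beta> * y - of_int (lbl (j, j')))) \<longlonglongrightarrow> (\<Sum>j'<n. P j j' * g j' (\<beta> * y - of_int (lbl (j, j'))))"
    by (intro tendsto_sum tendsto_mult_left N_lim) auto
  show "\<forall>\<^sub>F k in sequentially. N (Suc k) j y \<le> (\<Sum>j'<n. P j j' * N k j' (\<beta> * y - of_int (lbl (j, j'))))"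
    using N_harm[OF assms] by simp
qed

lemma g_mu: "measure \<mu> {s \<in> K. phi s = y} \<le> (\<Sum>i<n. vL i * vR i * g i y)"
proof (rule tendsto_le[OF trivial_limit_sequentially])
  show "(\<lambda>k. \<Sum>i<n. vL i * vR i * N k i y) \<longlonglongrightarrow> (\<Sum>i<n. vL i * vR i * g i y)"
    by (intro tendsto_sum tendsto_mult_left N_lim) auto
  show "(\<lambda>k. measure \<mu> {s \<in> K. phi s = y}) \<longlonglongrightarrow> measure \<mu> {s \<in> K. phi s = y}" by simp
  show "\<forall>\<^sub>F k in sequentially. measure \<mu> {s \<in> K. phi s = y} \<le> (\<Sum>i<n. vL i * vR i * N k i y)"
    using N_mu by simp
qed

lemma g_total: assumes "j < n" "finite Y" shows "(\<Sum>y\<in>Y. g j y) \<le> 1"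
proof (rule tendsto_le[OF trivial_limit_sequentially])
  show "(\<lambda>k. \<Sum>y\<in>Y. N k j y) \<longlonglongrightarrow> (\<Sum>y\<in>Y. g j y)"
    by (intro tendsto_sum N_lim assms)
  show "(\<lambda>k. 1) \<longlonglongrightarrow> (1::real)" by simp
  have z: "(\<lambda>k. 2 * B / \<beta> ^ k) \<longlonglongrightarrow> 0"
  proof -
    have "(\<lambda>k. 2 * B * (1/\<beta>) ^ k) \<longlonglongrightarrow> 2 * B * 0"
      by (intro tendsto_mult_left LIMSEQ_realpow_zero) (use beta_gt in auto)
    then show ?thesis by (simp add: power_divide)
  qed
  have ev: "\<forall>\<^sub>F k in sequentially. \<forall>y\<in>Y. \<forall>y'\<in>Y. y \<noteq> y' \<longrightarrow> 2 * B / \<beta> ^ k < \<bar>y - y'\<bar>"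
  proof (intro eventually_ball_finite assms ballI)
    fix y y' assume "y \<in> Y" "y' \<in> Y"
    show "\<forall>\<^sub>F k in sequentially. y \<noteq> y' \<longrightarrow> 2 * B / \<beta> ^ k < \<bar>y - y'\<bar>"
    proof (cases "y = y'")
      case False
      then have "\<bar>y - y'\<bar> > 0" by simp
      from order_tendstoD(2)[OF z this] show ?thesis by (rule eventually_mono) auto
    qed simp
  qed
  show "\<forall>\<^sub>F k in sequentially. (\<Sum>y\<in>Y. N k j y) \<le> 1"
  proof (rule eventually_mono[OF ev])
    fix k assume h: "\<forall>y\<in>Y. \<forall>y'\<in>Y. y \<noteq> y' \<longrightarrow> 2 * B / \<beta> ^ k < \<bar>y - y'\<bar>"
    show "(\<Sum>y\<in>Y. N k j y) \<le> 1"
    proof (rule N_total[OF assms])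
      fix y y' assume "y \<in> Y" "y' \<in> Y" "y \<noteq> y'"
      then have "2 * B / \<beta> ^ k < \<bar>y - y'\<bar>" using h by auto
      then show "W k y \<inter> W k y' = {}" using W_close by fastforce
    qed
  qed
qed

lemma g_bound: assumes "j < n" "g j y > 0" shows "\<bar>y\<bar> \<le> B"
proof -
  have "N 0 j y > 0" using g_le[OF assms(1), of y 0] assms(2) by linarith
  then have "W 0 y \<noteq> {}" unfolding N_def by auto
  then show ?thesis using W_nonempty by auto
qed

lemma g_finite: assumes "j < n" "c > 0" shows "finite {y. g j y \<ge> c}"
proof (rule ccontr)
  assume "infinite {y. g j y \<ge> c}"
  then obtain Y where Y: "finite Y" "card Y = nat \<lceil>1 / c\<rceil> + 1" "Y \<subseteq> {y. g j y \<ge> c}"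
    using infinite_arbitrarily_large by blast
  have "real (card Y) * c = (\<Sum>y\<in>Y. c)" by simp
  also have "\<dots> \<le> (\<Sum>y\<in>Y. g j y)" using Y(3) by (intro sum_mono) auto
  also have "\<dots> \<le> 1" by (rule g_total[OF assms(1) Y(1)])
  finally have a: "real (card Y) * c \<le> 1" .
  have "real (card Y) > 1 / c" using Y(2) by linarith
  then have "real (card Y) * c > 1" using assms(2) by (simp add: field_simps)
  then show False using a by simp
qed

abbreviation "Mt \<equiv> total_matrix Alph E lbl"

lemma n_pos_prim: obtains k where "k > 0" "\<forall>i<n. \<forall>j<n. mat_pow n Mt k i j > 0"
  using prim unfolding primitive_matrix_def by auto

lemma sum_pos_ex: "(\<Sum>l<n. f l) > (0::real) \<Longrightarrow> \<exists>l<n. f l > 0"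
proof (rule ccontr)
  assume "sum f {..<n} > 0" "\<not> (\<exists>l<n. f l > 0)"
  then have "sum f {..<n} \<le> 0" by (intro sum_nonpos) auto
  then show False using \<open>sum f {..<n} > 0\<close> by simp
qed

lemma mat_pow_Suc_pos:
  assumes "mat_pow n Mt (Suc k) i j > 0"
  shows "\<exists>l<n. (i, l) \<in> E \<and> mat_pow n Mt k l j > 0"
proof -
  have "(\<Sum>l<n. Mt i l * mat_pow n Mt k l j) > 0" using assms by (simp add: mat_mult_def)
  then obtain l where l: "l < n" "Mt i l * mat_pow n Mt k l j > 0" using sum_pos_ex by blast
  then have "(i, l) \<in> E" by (auto simp: total_matrix_eq split: if_splits)
  moreover have "mat_pow n Mt k l j > 0" using l by (auto simp: total_matrix_eq split: if_splits)
  ultimately show ?thesis using l by auto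
qed

lemma succ_exists: assumes "i < n" shows "\<exists>i'. (i, i') \<in> E"
proof -
  obtain k where k: "k > 0" "\<forall>i<n. \<forall>j<n. mat_pow n Mt k i j > 0" by (rule n_pos_prim)
  then obtain k' where "k = Suc k'" by (cases k) auto
  then show ?thesis using mat_pow_Suc_pos k assms by blast
qed

lemma path_reach:
  assumes cl: "\<And>i z i'. Q i z \<Longrightarrow> (i, i') \<in> E \<Longrightarrow> Q i' (\<beta> * z - of_int (lbl (i, i')))"
  shows "mat_pow n Mt k i j > 0 \<Longrightarrow> Q i z \<Longrightarrow> \<exists>z'. Q j z'"
proof (induction k arbitrary: i z)
  case 0
  then have "i = j" by (auto simp: mat_id_def split: if_splits)
  then show ?case using 0 by auto
next
  case (Suc k)
  then obtain l where "(i, l) \<in> E" "mat_pow n Mt k l j > 0" using mat_pow_Suc_pos by blast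
  then show ?case using Suc cl by blast
qed

definition consistent :: "(nat \<Rightarrow> real) \<Rightarrow> bool" where
  "consistent yv \<longleftrightarrow> (\<forall>i j. (i, j) \<in> E \<longrightarrow> yv j = \<beta> * yv i - of_int (lbl (i, j)))"

lemma consistent_exists:
  assumes "j0 < n" "g j0 y0 > 0"
  shows "\<exists>yv. consistent yv"
proof -
  define c where "c = g j0 y0"
  define T where "T = Sigma {..<n} (\<lambda>j. {y. g j y \<ge> c})"
  have finT: "finite T" unfolding T_def using g_finite assms c_def by auto
  have inT: "(j0, y0) \<in> T" unfolding T_def c_def using assms by auto
  define G where "G = Max ((\<lambda>(j,y). g j y) ` T)"
  have cG: "c \<le> G" unfolding G_def c_def using finT inT by (intro Max_ge) auto
  have Gmax: "g j y \<le> G" if "j < n" for j y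
  proof (cases "g j y \<ge> c")
    case True
    then have "(j, y) \<in> T" unfolding T_def using that by auto
    then show ?thesis unfolding G_def using finT by (intro Max_ge) auto
  qed (use cG in auto)
  have "G \<in> (\<lambda>(j,y). g j y) ` T" unfolding G_def using finT inT by (intro Max_in) auto
  then obtain jm ym where m: "(jm, ym) \<in> T" "g jm ym = G" by auto
  have jm: "jm < n" using m unfolding T_def by auto
  have Gpos: "G > 0" using cG assms c_def by simp
  define S where "S = (\<lambda>j y. j < n \<and> g j y = G)"
  have Sm: "S jm ym" unfolding S_def using m jm by auto
  have cl: "S i' (\<beta> * z - of_int (lbl (i, i')))" if "S i z" "(i, i') \<in> E" for i z i'
  proof -
    have i: "i < n" and i': "i' < n" using that graph unfolding S_def by auto
    let ?h = "\<lambda>j'. P i j' * (G - g j' (\<beta> * z - of_int (lbl (i, j'))))"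
    have "(\<Sum>j'<n. ?h j') = G * (\<Sum>j'<n. P i j') - (\<Sum>j'<n. P i j' * g j' (\<beta> * z - of_int (lbl (i, j'))))"
      by (simp add: algebra_simps sum_subtractf sum_distrib_left)
    also have "\<dots> = g i z - (\<Sum>j'<n. P i j' * g j' (\<beta> * z - of_int (lbl (i, j'))))"
      using P_sum[OF i] that(1) unfolding S_def by simp
    also have "\<dots> \<le> 0" using g_harm[OF i, of z] by simp
    finally have s0: "(\<Sum>j'<n. ?h j') \<le> 0" .
    have "?h i' \<le> (\<Sum>j'<n. ?h j')"
      by (rule member_le_sum) (use i' P_nonneg[OF i] Gmax in \<open>auto intro!: mult_nonneg_nonneg\<close>)
    then have "?h i' \<le> 0" using s0 by simp
    then have "G - g i' (\<beta> * z - of_int (lbl (i, i'))) \<le> 0"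
      using P_pos[OF that(2)] by (simp add: mult_le_0_iff)
    moreover have "g i' (\<beta> * z - of_int (lbl (i, i'))) \<le> G" by (rule Gmax[OF i'])
    ultimately show ?thesis unfolding S_def using i' by linarith
  qed
  have uniq: "y = y'" if "S j y" "S j y'" for j y y'
  proof (rule ccontr)
    assume ne: "y \<noteq> y'"
    have "\<exists>i z z'. S i z \<and> S i z' \<and> z - z' = \<beta> ^ k * (y - y')" for k
    proof (induction k)
      case 0 then show ?case using that by auto
    next
      case (Suc k)
      then obtain i z z' where h: "S i z" "S i z'" "z - z' = \<beta> ^ k * (y - y')" by blast
      then have "i < n" unfolding S_def by auto
      then obtain i' where e: "(i, i') \<in> E" using succ_exists by blast
      have "S i' (\<beta> * z - of_int (lbl (i, i')))" "S i' (\<beta> * z' - of_int (lbl (i, i')))"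
        using cl[OF h(1) e] cl[OF h(2) e] .
      moreover have "(\<beta> * z - of_int (lbl (i, i'))) - (\<beta> * z' - of_int (lbl (i, i'))) = \<beta> ^ Suc k * (y - y')"
      proof -
        have "(\<beta> * z - of_int (lbl (i, i'))) - (\<beta> * z' - of_int (lbl (i, i'))) = \<beta> * (z - z')"
          by (simp add: algebra_simps)
        then show ?thesis using h(3) by simp
      qed
      ultimately show ?case by blast
    qed
    have bnd: "\<bar>\<beta> ^ k * (y - y')\<bar> \<le> 2 * B" for k
    proof -
      obtain i z z' where h: "S i z" "S i z'" "z - z' = \<beta> ^ k * (y - y')"
        using \<open>\<And>k. \<exists>i z z'. S i z \<and> S i z' \<and> z - z' = \<beta> ^ k * (y - y')\<close> by blast
      have "\<bar>z\<bar> \<le> B" "\<bar>z'\<bar> \<le> B" using h(1,2) g_bound Gpos unfolding S_def by auto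
      then show ?thesis using h(3) by linarith
    qed
    have d: "\<bar>y - y'\<bar> > 0" using ne by simp
    obtain k where k: "2 * B / \<bar>y - y'\<bar> < \<beta> ^ k" using real_arch_pow[OF beta_gt] by blast
    then have "2 * B < \<beta> ^ k * \<bar>y - y'\<bar>" using d by (simp add: field_simps)
    moreover have "\<bar>\<beta> ^ k * (y - y')\<bar> = \<beta> ^ k * \<bar>y - y'\<bar>" using beta_pos by (simp add: abs_mult)
    ultimately show False using bnd[of k] by simp
  qed
  have reach: "\<exists>y. S j y" if "j < n" for j
  proof -
    obtain k where k: "k > 0" "\<forall>i<n. \<forall>j<n. mat_pow n Mt k i j > 0" by (rule n_pos_prim)
    show ?thesis using path_reach[of S, OF cl _ Sm] k jm that by blast
  qed
  define yv where "yv = (\<lambda>j. SOME y. S j y)"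
  have Syv: "S j (yv j)" if "j < n" for j using reach[OF that] unfolding yv_def by (rule someI_ex)
  have "consistent yv" unfolding consistent_def
  proof (intro allI impI)
    fix i j assume e: "(i, j) \<in> E"
    then have "i < n" "j < n" using graph by auto
    then show "yv j = \<beta> * yv i - of_int (lbl (i, j))"
      using uniq[OF Syv[of j] cl[OF Syv[of i] e]] by simp
  qed
  then show ?thesis by blast
qed

lemma phi_consistent:
  assumes cy: "consistent yv" and s: "s \<in> K"
  shows "\<exists>i<n. phi s = yv i"
proof -
  obtain p where p: "\<forall>k. p k < n \<and> (p k, p (Suc k)) \<in> E \<and> s k = lbl (p k, p (Suc k))"
    using s unfolding K_plus_def by auto
  have step: "yv (p (Suc k)) = \<beta> * yv (p k) - of_int (s k)" for k
    using cy p unfolding consistent_def by auto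
  have ps: "(\<Sum>t<k. real_of_int (s t) / \<beta> ^ Suc t) = yv (p 0) - yv (p k) / \<beta> ^ k" for k
  proof (induction k)
    case 0 then show ?case by simp
  next
    case (Suc k)
    have "yv (p k) / \<beta> ^ k - yv (p (Suc k)) / \<beta> ^ Suc k = real_of_int (s k) / \<beta> ^ Suc k"
      using step[of k] beta_pos by (simp add: field_simps)
    then show ?case using Suc by simp
  qed
  define Y where "Y = Max ((\<lambda>i. \<bar>yv i\<bar>) ` {..<n})"
  have Yb: "\<bar>yv (p k)\<bar> \<le> Y" for k unfolding Y_def using p by (intro Max_ge) auto
  have z: "(\<lambda>k. yv (p k) / \<beta> ^ k) \<longlonglongrightarrow> 0"
  proof (rule tendsto_sandwich[of "\<lambda>k. - (Y * (1/\<beta>) ^ k)" _ _ "\<lambda>k. Y * (1/\<beta>) ^ k"])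
    have l: "(\<lambda>k. Y * (1/\<beta>) ^ k) \<longlonglongrightarrow> Y * 0"
      by (intro tendsto_mult_left LIMSEQ_realpow_zero) (use beta_gt in auto)
    then show "(\<lambda>k. Y * (1/\<beta>) ^ k) \<longlonglongrightarrow> 0" by simp
    show "(\<lambda>k. - (Y * (1/\<beta>) ^ k)) \<longlonglongrightarrow> 0" using tendsto_minus[OF l] by simp
    have b: "\<bar>yv (p k) / \<beta> ^ k\<bar> \<le> Y * (1/\<beta>) ^ k" for k
      using Yb[of k] beta_pos by (simp add: abs_divide power_divide divide_right_mono)
    show "\<forall>\<^sub>F k in sequentially. - (Y * (1/\<beta>) ^ k) \<le> yv (p k) / \<beta> ^ k"
      by (rule always_eventually, rule allI, rule abs_le_D2[OF b, simplified neg_le_iff_le minus_le_iff])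
    show "\<forall>\<^sub>F k in sequentially. yv (p k) / \<beta> ^ k \<le> Y * (1/\<beta>) ^ k"
      by (rule always_eventually, rule allI, rule abs_le_D1[OF b])
  qed
  have "(\<lambda>t. real_of_int (s t) / \<beta> ^ Suc t) sums yv (p 0)"
    unfolding sums_def ps using tendsto_diff[OF tendsto_const z, of "yv (p 0)"] by simp
  then have "phi s = yv (p 0)" unfolding phi_plus_def by (rule sums_unique[symmetric])
  then show ?thesis using p by auto
qed

lemma map_poly_of_rat_diff: "map_poly (of_rat :: rat \<Rightarrow> real) (p - q) = map_poly of_rat p - map_poly of_rat q"
  by (rule poly_eqI) (simp add: coeff_map_poly of_rat_diff)

lemma path_poly:
  assumes cy: "consistent yv"
  shows "mat_pow n Mt k i j > 0 \<Longrightarrow> \<exists>q::rat poly. \<beta> ^ k * yv i = poly (map_poly of_rat q) \<beta> + yv j"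
proof (induction k arbitrary: i)
  case 0
  then have "i = j" by (auto simp: mat_id_def split: if_splits)
  then show ?case by (intro exI[of _ 0]) simp
next
  case (Suc k)
  then obtain l where l: "(i, l) \<in> E" "mat_pow n Mt k l j > 0" using mat_pow_Suc_pos by blast
  then obtain q where q: "\<beta> ^ k * yv l = poly (map_poly of_rat q) \<beta> + yv j" using Suc by blast
  have e: "yv l = \<beta> * yv i - of_int (lbl (i, l))" using cy l unfolding consistent_def by auto
  let ?q = "q + monom (of_int (lbl (i, l))) k"
  have "poly (map_poly of_rat ?q) \<beta> = poly (map_poly of_rat q) \<beta> + of_int (lbl (i, l)) * \<beta> ^ k"
    by (simp add: map_poly_of_rat_add map_poly_monom poly_monom)
  then have "\<beta> ^ Suc k * yv i = poly (map_poly of_rat ?q) \<beta> + yv j"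
    using q e by (simp add: algebra_simps)
  then show ?case by blast
qed

lemma consistent_rat:
  assumes cy: "consistent yv" and i: "i < n"
  shows "yv i \<in> rat_adjoin \<beta>"
proof -
  obtain k where k: "k > 0" "\<forall>i<n. \<forall>j<n. mat_pow n Mt k i j > 0" by (rule n_pos_prim)
  then obtain q where q: "\<beta> ^ k * yv i = poly (map_poly of_rat q) \<beta> + yv i"
    using path_poly[OF cy] i by blast
  let ?d = "monom (1::rat) k - 1"
  have d: "poly (map_poly of_rat ?d) \<beta> = \<beta> ^ k - 1"
    by (simp add: map_poly_of_rat_diff map_poly_monom poly_monom)
  have "\<beta> ^ k > 1" using beta_gt k(1) by (simp add: one_less_power)
  then have ne: "poly (map_poly of_rat ?d) \<beta> \<noteq> 0" using d by simp
  have "yv i = poly (map_poly of_rat q) \<beta> / poly (map_poly of_rat ?d) \<beta>"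
    using q ne unfolding d by (simp add: field_simps)
  then show ?thesis unfolding rat_adjoin_def using ne by blast
qed

lemma atoms_result:
  shows "finite {x::real. measure \<mu> {s \<in> K. phi s = x} > 0}
       \<and> {x::real. measure \<mu> {s \<in> K. phi s = x} > 0} \<subseteq> rat_adjoin \<beta>"
proof (cases "{x::real. measure \<mu> {s \<in> K. phi s = x} > 0} = {}")
  case True then show ?thesis by simp
next
  case False
  then obtain x where x: "measure \<mu> {s \<in> K. phi s = x} > 0" by auto
  have "\<exists>i<n. g i x > 0"
  proof (rule ccontr)
    assume "\<not> (\<exists>i<n. g i x > 0)"
    then have "\<forall>i<n. g i x = 0" using g_nonneg by (meson not_less order_antisym)
    then have "(\<Sum>i<n. vL i * vR i * g i x) = 0" by simp
    then show False using g_mu[of x] x by simp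
  qed
  then obtain i where "i < n" "g i x > 0" by blast
  then obtain yv where cy: "consistent yv" using consistent_exists by blast
  have sub: "{x::real. measure \<mu> {s \<in> K. phi s = x} > 0} \<subseteq> yv ` {..<n}"
  proof
    fix x' assume "x' \<in> {x::real. measure \<mu> {s \<in> K. phi s = x} > 0}"
    then have "{s \<in> K. phi s = x'} \<noteq> {}" by (metis (no_types, lifting) measure_empty less_irrefl mem_Collect_eq)
    then obtain s where "s \<in> K" "phi s = x'" by auto
    then show "x' \<in> yv ` {..<n}" using phi_consistent[OF cy] by fastforce
  qed
  have "yv ` {..<n} \<subseteq> rat_adjoin \<beta>" using consistent_rat[OF cy] by auto
  then show ?thesis using sub finite_subset by blast
qed


end

theorem lemma3:
  fixes Alph :: "int set" and n :: nat and E :: "(nat \<times> nat) set" and lbl :: "nat \<times> nat \<Rightarrow> int"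
    and \<beta> lam :: real and vL vR :: "nat \<Rightarrow> real" and \<mu> :: "(nat \<Rightarrow> int) measure"
  assumes alph: "finite Alph"
    and graph: "E \<subseteq> {..<n} \<times> {..<n}"
    and lab_in: "\<forall>e\<in>E. lbl e \<in> Alph"
    and prim: "primitive_matrix n (total_matrix Alph E lbl)"
    and pis: "pisot \<beta>"
    and lam_pos: "lam > 0"
    and vL_pos: "\<forall>i<n. vL i > 0" and vR_pos: "\<forall>i<n. vR i > 0"
    and vL_eig: "\<forall>j<n. (\<Sum>i<n. vL i * total_matrix Alph E lbl i j) = lam * vL j"
    and vR_eig: "\<forall>i<n. (\<Sum>j<n. total_matrix Alph E lbl i j * vR j) = lam * vR i"
    and dominant: "\<forall>(c::complex) (w::nat \<Rightarrow> complex). (\<exists>i<n. w i \<noteq> 0) \<and>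
        (\<forall>i<n. (\<Sum>j<n. complex_of_real (total_matrix Alph E lbl i j) * w j) = c * w i) \<longrightarrow> cmod c \<le> lam"
    and norm: "(\<Sum>i<n. vL i * vR i) = 1"
    and mu_prob: "prob_space \<mu>"
    and mu_sets: "sets \<mu> = sets (PiM UNIV (\<lambda>_::nat. count_space (UNIV :: int set)))"
    and mu_supp: "emeasure \<mu> (K_plus n E lbl) = 1"
    and mu_cyl: "\<forall>w::int list. measure \<mu> (cylinder (K_plus n E lbl) w) =
        bilin n vL (word_matrix n E lbl w) vR / lam ^ length w"
  shows "finite {x::real. measure \<mu> {s \<in> K_plus n E lbl. phi_plus \<beta> s = x} > 0}
       \<and> {x::real. measure \<mu> {s \<in> K_plus n E lbl. phi_plus \<beta> s = x} > 0} \<subseteq> rat_adjoin \<beta>"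
proof -
  have b: "\<beta> > 1" using pis unfolding pisot_def by auto
  interpret setting Alph n E lbl \<beta> lam vL vR \<mu>
    by (rule setting.intro[OF alph graph lab_in prim b lam_pos vL_pos vR_pos vR_eig mu_prob mu_sets mu_supp mu_cyl])
  show ?thesis by (rule atoms_result)
qed

end
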